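(* With the notation of the context, for every $\rho\in(-1,1)$, $$e^{-\frac{\eta^2T}{2}}\le\frac{1+\frac{w(\rho)}{2}}{e^{\frac{\eta^2T}{2}}+\frac{w(\rho)}{2}}\le\frac{D}{p}\le1,$$ $$1\le\frac{G}{p}\le1+\frac{w(\rho)e_2}{2\eta^2T+\eta^2Tw(\rho)}\le1+\frac{e_2}{\eta^2T},$$ where $e_2=e^{2\eta^2T}-2(1+\eta^2T)e^{\frac{\eta^2T}{2}}+\eta^2T+1$.
   Context: Fix $T>0$, $r,\nu,\mu\in\mathbb R$, $\eta>0$, $\sigma>0$, $\rho\in(-1,1)$, $s_0>0$, $\lambda>0$, $\gamma>0$; $N$ is a standard Gaussian random variable; $W$ is the Lambert function (inverse of $x\in(-1,\infty)\mapsto xe^x$). Let $\theta(\rho)=\lambda\gamma(1-\rho^2)$, $w(\rho)=W\left(s_0\eta^2Te^{(\nu-\eta\rho\frac{\mu-r}{\sigma}-\frac{\eta^2}{2})T}\theta(\rho)\right)$, $$D=\frac{\lambda e^{-rT}}{\theta(\rho)\eta^2T}w(\rho)\left(1+\frac{w(\rho)}2\right),\qquad G=\frac{\lambda e^{-rT}}{\theta(\rho)}\frac{w(\rho)}{\eta^2T}\left(e^{\frac{\eta^2}{2}T}+\frac{w(\rho)}2\right),$$ and let $p$ be the asking reservation price of $\lambda$ units of the non-traded stock, $$p=-\frac{e^{-rT}}{\gamma(1-\rho^2)}\ln\mathbb E\exp\left(-\theta(\rho)s_0e^{(\nu-\eta\rho\frac{\mu-r}{\sigma}-\frac{\eta^2}{2})T}e^{\eta\sqrt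 TN}\right).$$ *)

theory Defs
  imports "HOL-Probability.Probability"
begin

definition lambertW :: "real \<Rightarrow> real" where
  "lambertW y = (THE x. -1 < x \<and> x * exp x = y)"

end

theory Submission
  imports Defs
begin


lemma xexp_strict_mono:
  fixes x1 x2 :: real
  assumes "-1 < x1" "x1 < x2"
  shows "x1 * exp x1 < x2 * exp x2"
proof -
  have "\<exists>y. ((\<lambda>x. x * exp x) has_real_derivative y) (at x) \<and> y > 0" if "x1 \<le> x" "x \<le> x2" for x
  proof -
    have "((\<lambda>x. x * exp x) has_real_derivative (1 + x) * exp x) (at x)"
      by (auto intro!: derivative_eq_intros simp: algebra_simps)
    moreover have "0 < (1 + x) * exp x" using assms that by simp
    ultimately show ?thesis by blast
  qed
  then show ?thesis by (rule DERIV_pos_imp_increasing[OF assms(2)])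
qed

lemma lambertW_prop:
  fixes y :: real assumes "y > 0"
  shows "lambertW y > 0 \<and> lambertW y * exp (lambertW y) = y"
proof -
  have "\<exists>x. 0 \<le> x \<and> x \<le> y \<and> x * exp x = y"
  proof (rule IVT)
    show "0 * exp 0 \<le> y" using assms by simp
    have "y * 1 \<le> y * exp y" using assms by (intro mult_left_mono) auto
    then show "y \<le> y * exp y" by simp
    show "0 \<le> y" using assms by simp
    show "\<forall>x. 0 \<le> x \<and> x \<le> y \<longrightarrow> isCont (\<lambda>x. x * exp x) x" by (auto intro!: continuous_intros)
  qed
  then obtain x where x: "0 \<le> x" "x * exp x = y" by blast
  have ex: "-1 < x \<and> x * exp x = y" using x by simp
  have uq: "z = x" if z: "-1 < z \<and> z * exp z = y" for z
  proof (rule ccontr)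
    assume "z \<noteq> x"
    then consider "z < x" | "x < z" by linarith
    then show False
    proof cases
      case 1
      then have "z * exp z < x * exp x" using z by (intro xexp_strict_mono) simp_all
      then show False using z ex by simp
    next
      case 2
      then have "x * exp x < z * exp z" using ex by (intro xexp_strict_mono) simp_all
      then show False using z ex by simp
    qed
  qed
  have lw: "lambertW y = x" unfolding lambertW_def
    by (rule the_equality[of "\<lambda>x. -1 < x \<and> x * exp x = y", OF ex uq])
  have "x \<noteq> 0" using x assms by (intro notI) simp
  then have "x > 0" using x(1) by simp
  then show ?thesis using x lw by simp
qed

lemma shift_integral:
  fixes g :: "real \<Rightarrow> real" and c :: real
  shows "(\<integral>x. g x * std_normal_density x \<partial>lborel)
     = exp (- c\<^sup>2 / 2) * (\<integral>x. g (x + c) * exp (- c * x) * std_normal_density x \<partial>lborel)"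
proof -
  have e: "std_normal_density (x + c) = exp (- c\<^sup>2 / 2) * (exp (- c * x) * std_normal_density x)" for x
  proof -
    have a: "- (x + c)\<^sup>2 / 2 = - c\<^sup>2 / 2 + (- c * x + - x\<^sup>2 / 2)"
      by (simp add: power2_eq_square field_simps)
    have "exp (- (x + c)\<^sup>2 / 2) = exp (- c\<^sup>2 / 2) * (exp (- c * x) * exp (- x\<^sup>2 / 2))"
      by (simp only: a exp_add)
    then show ?thesis unfolding std_normal_density_def by simp
  qed
  have e': "g (c + 1 * x) * std_normal_density (c + 1 * x) = exp (- c\<^sup>2 / 2) * (g (x + c) * exp (- c * x) * std_normal_density x)" for x
  proof -
    have h: "c + 1 * x = x + c" by simp
    show ?thesis unfolding h e by (simp only: ac_simps)
  qed
  have "(\<integral>x. g x * std_normal_density x \<partial>lborel)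
      = (\<integral>x. g (c + 1 * x) * std_normal_density (c + 1 * x) \<partial>lborel)"
    using lborel_integral_real_affine[where c=1 and t=c and f="\<lambda>x. g x * std_normal_density x"] by simp
  also have "\<dots> = (\<integral>x. exp (- c\<^sup>2 / 2) * (g (x + c) * exp (- c * x) * std_normal_density x) \<partial>lborel)"
    by (rule Bochner_Integration.integral_cong) (rule refl, rule e')
  also have "\<dots> = exp (- c\<^sup>2 / 2) * (\<integral>x. g (x + c) * exp (- c * x) * std_normal_density x \<partial>lborel)"
    by simp
  finally show ?thesis .
qed

lemma shift_integrable:
  fixes g :: "real \<Rightarrow> real" and c :: real
  shows "integrable lborel (\<lambda>x. g x * std_normal_density x)
     \<longleftrightarrow> integrable lborel (\<lambda>x. g (x + c) * exp (- c * x) * std_normal_density x)"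
proof -
  have e: "std_normal_density (x + c) = exp (- c\<^sup>2 / 2) * (exp (- c * x) * std_normal_density x)" for x
  proof -
    have a: "- (x + c)\<^sup>2 / 2 = - c\<^sup>2 / 2 + (- c * x + - x\<^sup>2 / 2)"
      by (simp add: power2_eq_square field_simps)
    have "exp (- (x + c)\<^sup>2 / 2) = exp (- c\<^sup>2 / 2) * (exp (- c * x) * exp (- x\<^sup>2 / 2))"
      by (simp only: a exp_add)
    then show ?thesis unfolding std_normal_density_def by simp
  qed
  have e': "g (c + 1 * x) * std_normal_density (c + 1 * x) = exp (- c\<^sup>2 / 2) * (g (x + c) * exp (- c * x) * std_normal_density x)" for x
  proof -
    have h: "c + 1 * x = x + c" by simp
    show ?thesis unfolding h e by (simp only: ac_simps)
  qed
  have "integrable lborel (\<lambda>x. g x * std_normal_density x)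
      \<longleftrightarrow> integrable lborel (\<lambda>x. g (c + 1 * x) * std_normal_density (c + 1 * x))"
    using lborel_integrable_real_affine_iff[where c=1 and t=c and f="\<lambda>x. g x * std_normal_density x"] by simp
  also have "\<dots> \<longleftrightarrow> integrable lborel (\<lambda>x. exp (- c\<^sup>2 / 2) * (g (x + c) * exp (- c * x) * std_normal_density x))"
  proof -
    have "(\<lambda>x. g (c + 1 * x) * std_normal_density (c + 1 * x)) = (\<lambda>x. exp (- c\<^sup>2 / 2) * (g (x + c) * exp (- c * x) * std_normal_density x))"
      by (simp only: e')
    then show ?thesis by simp
  qed
  also have "\<dots> \<longleftrightarrow> integrable lborel (\<lambda>x. g (x + c) * exp (- c * x) * std_normal_density x)"
    by simp
  finally show ?thesis .
qed

lemma gauss_exp: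
  "has_bochner_integral lborel (\<lambda>x. exp (b * x) * std_normal_density x) (exp (b\<^sup>2 / 2))"
proof -
  have eq: "(\<lambda>x. exp (b * (x + b)) * exp (- b * x) * std_normal_density x) = (\<lambda>x. exp (b\<^sup>2) * std_normal_density x)"
    unfolding mult_exp_exp by (simp add: power2_eq_square algebra_simps)
  have "integrable lborel (\<lambda>x. exp (b * x) * std_normal_density x)"
    using shift_integrable[of "\<lambda>x. exp (b * x)" b, unfolded eq] by simp
  moreover have "(\<integral>x. exp (b * x) * std_normal_density x \<partial>lborel) = exp (b\<^sup>2 / 2)"
  proof -
    have "(\<integral>x. exp (b * x) * std_normal_density x \<partial>lborel) = exp (- b\<^sup>2 / 2) * exp (b\<^sup>2)"
      using shift_integral[of "\<lambda>x. exp (b * x)" b, unfolded eq] by simp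
    also have "\<dots> = exp (b\<^sup>2 / 2)" unfolding mult_exp_exp by simp
    finally show ?thesis .
  qed
  ultimately show ?thesis by (simp add: has_bochner_integral_iff)
qed

lemma gauss_xexp:
  "has_bochner_integral lborel (\<lambda>x. x * exp (b * x) * std_normal_density x) (b * exp (b\<^sup>2 / 2))"
proof -
  have eq0: "(x + b) * exp (b * (x + b)) * exp (- b * x) * std_normal_density x
     = exp (b\<^sup>2) * (std_normal_density x * x) + (exp (b\<^sup>2) * b) * std_normal_density x" for x
  proof -
    have "exp (b * (x + b)) * exp (- b * x) = exp (b\<^sup>2)"
      unfolding mult_exp_exp by (simp add: power2_eq_square algebra_simps)
    then show ?thesis by (simp add: algebra_simps)
  qed
  have eq: "(\<lambda>x. (x + b) * exp (b * (x + b)) * exp (- b * x) * std_normal_density x)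
     = (\<lambda>x. exp (b\<^sup>2) * (std_normal_density x * x) + (exp (b\<^sup>2) * b) * std_normal_density x)"
    using eq0 by simp
  have h1: "has_bochner_integral lborel (\<lambda>x. std_normal_density x * x) 0"
    using std_normal_moment_odd[of 0] by simp
  have h0: "has_bochner_integral lborel (\<lambda>x. std_normal_density x) 1"
    by (simp add: has_bochner_integral_iff)
  have H: "has_bochner_integral lborel
     (\<lambda>x. exp (b\<^sup>2) * (std_normal_density x * x) + (exp (b\<^sup>2) * b) * std_normal_density x) (exp (b\<^sup>2) * b)"
    using has_bochner_integral_add[OF has_bochner_integral_mult_right[OF h1, of "exp (b\<^sup>2)"]
        has_bochner_integral_mult_right[OF h0, of "exp (b\<^sup>2) * b"]] by simp
  have "integrable lborel (\<lambda>x. x * exp (b * x) * std_normal_density x)"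
    using shift_integrable[of "\<lambda>x. x * exp (b * x)" b, unfolded eq] H by (simp add: has_bochner_integral_iff)
  moreover have "(\<integral>x. x * exp (b * x) * std_normal_density x \<partial>lborel) = b * exp (b\<^sup>2 / 2)"
  proof -
    have "(\<integral>x. x * exp (b * x) * std_normal_density x \<partial>lborel) = exp (- b\<^sup>2 / 2) * (exp (b\<^sup>2) * b)"
      using shift_integral[of "\<lambda>x. x * exp (b * x)" b, unfolded eq] H by (simp add: has_bochner_integral_iff)
    also have "\<dots> = b * exp (b\<^sup>2 / 2)"
    proof -
      have "exp (- b\<^sup>2 / 2) * exp (b\<^sup>2) = exp (b\<^sup>2 / 2)" unfolding mult_exp_exp by simp
      then show ?thesis by (simp add: ac_simps)
    qed
    finally show ?thesis .
  qed
  ultimately show ?thesis by (simp add: has_bochner_integral_iff)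
qed



lemma exp_neg_quad:
  fixes u :: real assumes "0 \<le> u"
  shows "exp (- u) \<le> 1 - u + u\<^sup>2 / 2"
proof -
  let ?f = "\<lambda>u::real. 1 - u + u\<^sup>2 / 2 - exp (- u)"
  have "?f 0 \<le> ?f u"
  proof (rule DERIV_nonneg_imp_increasing_open[OF assms])
    fix x :: real assume "0 < x" "x < u"
    have "(?f has_real_derivative (- 1 + x + exp (- x))) (at x)"
      by (auto intro!: derivative_eq_intros simp: power2_eq_square algebra_simps)
    moreover have "0 \<le> - 1 + x + exp (- x)" using exp_ge_add_one_self[of "- x"] by linarith
    ultimately show "\<exists>y. (?f has_real_derivative y) (at x) \<and> 0 \<le> y" by blast
  next
    show "continuous_on {0..u} ?f" by (intro continuous_intros) auto
  qed
  then show ?thesis by simp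
qed

lemma gauss_moments:
  fixes s :: real
  shows "has_bochner_integral lborel (\<lambda>x. (exp (s * x) - s * x) * std_normal_density x) (exp (s\<^sup>2 / 2))"
    and "has_bochner_integral lborel (\<lambda>x. (exp (s * x) - s * x - 1)\<^sup>2 * std_normal_density x)
           (exp (2 * s\<^sup>2) - 2 * (1 + s\<^sup>2) * exp (s\<^sup>2 / 2) + s\<^sup>2 + 1)"
proof -
  have H0: "has_bochner_integral lborel (\<lambda>x. std_normal_density x) 1"
    by (simp add: has_bochner_integral_iff)
  have H1: "has_bochner_integral lborel (\<lambda>x. x * std_normal_density x) 0"
    using std_normal_moment_odd[of 0] by (simp add: mult.commute)
  have H2: "has_bochner_integral lborel (\<lambda>x. x\<^sup>2 * std_normal_density x) 1"
    using std_normal_moment_even[of 1] by (simp add: mult.commute)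
  have E1: "has_bochner_integral lborel (\<lambda>x. exp (s * x) * std_normal_density x) (exp (s\<^sup>2 / 2))"
    by (rule gauss_exp)
  have ee: "exp (s * x) * exp (s * x) = exp ((2 * s) * x)" for x
  proof -
    have "s * x + s * x = (2 * s) * x" by simp
    then show ?thesis unfolding mult_exp_exp by simp
  qed
  have E2: "has_bochner_integral lborel (\<lambda>x. exp (s * x) * exp (s * x) * std_normal_density x) (exp (2 * s\<^sup>2))"
    unfolding ee using gauss_exp[of "2 * s"] by (simp add: power2_eq_square)
  have XE: "has_bochner_integral lborel (\<lambda>x. x * exp (s * x) * std_normal_density x) (s * exp (s\<^sup>2 / 2))"
    by (rule gauss_xexp)
  have "has_bochner_integral lborel (\<lambda>x. exp (s * x) * std_normal_density x - s * (x * std_normal_density x))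
      (exp (s\<^sup>2 / 2) - s * 0)"
    by (intro has_bochner_integral_diff has_bochner_integral_mult_right E1 H1)
  then show "has_bochner_integral lborel (\<lambda>x. (exp (s * x) - s * x) * std_normal_density x) (exp (s\<^sup>2 / 2))"
    by (simp add: algebra_simps)
  note comb = has_bochner_integral_add[OF has_bochner_integral_diff[OF has_bochner_integral_diff[OF
      has_bochner_integral_add[OF has_bochner_integral_add[OF E2 has_bochner_integral_mult_right[OF H2, of "s\<^sup>2"]] H0]
      has_bochner_integral_mult_right[OF XE, of "2 * s"]]
      has_bochner_integral_mult_right[OF E1, of 2]]
      has_bochner_integral_mult_right[OF H1, of "2 * s"]]
  have funeq: "(\<lambda>x. (exp (s * x) - s * x - 1)\<^sup>2 * std_normal_density x) =
     (\<lambda>x. exp (s * x) * exp (s * x) * std_normal_density x + s\<^sup>2 * (x\<^sup>2 * std_normal_density x) + std_normal_density x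
        - (2 * s) * (x * exp (s * x) * std_normal_density x)
        - 2 * (exp (s * x) * std_normal_density x) + (2 * s) * (x * std_normal_density x))"
    by (rule ext) (simp add: power2_eq_square algebra_simps)
  have val: "exp (2 * s\<^sup>2) - 2 * (1 + s\<^sup>2) * exp (s\<^sup>2 / 2) + s\<^sup>2 + 1 =
     exp (2 * s\<^sup>2) + s\<^sup>2 * 1 + 1 - (2 * s) * (s * exp (s\<^sup>2 / 2)) - 2 * exp (s\<^sup>2 / 2) + (2 * s) * 0"
    by (simp add: power2_eq_square algebra_simps)
  show "has_bochner_integral lborel (\<lambda>x. (exp (s * x) - s * x - 1)\<^sup>2 * std_normal_density x)
           (exp (2 * s\<^sup>2) - 2 * (1 + s\<^sup>2) * exp (s\<^sup>2 / 2) + s\<^sup>2 + 1)"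
    unfolding funeq val by (rule comb)
qed



lemma final_ineq:
  fixes v w E e2 L :: real
  assumes v: "v > 0" and w: "w > 0" and E: "E \<ge> 1" and e2: "e2 \<ge> 0"
    and lo: "w / v * (1 + w / 2) \<le> L" and up: "L \<le> w / v * (E + w / 2)"
    and lo2: "w / v * (E + w / 2) - (w / v)\<^sup>2 * e2 / 2 \<le> L"
  shows "1 / E \<le> (1 + w / 2) / (E + w / 2)"
    and "(1 + w / 2) / (E + w / 2) \<le> (w / v * (1 + w / 2)) / L"
    and "(w / v * (1 + w / 2)) / L \<le> 1"
    and "1 \<le> (w / v * (E + w / 2)) / L"
    and "(w / v * (E + w / 2)) / L \<le> 1 + w * e2 / (2 * v + v * w)"
    and "1 + w * e2 / (2 * v + v * w) \<le> 1 + e2 / v"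
proof -
  have D0: "w / v * (1 + w / 2) > 0" using v w by simp
  then have L0: "L > 0" using lo by linarith
  have E0: "E > 0" using E by simp
  have G0: "w / v * (E + w / 2) > 0" using v w E0 by simp
  have "E + w / 2 \<le> E * (1 + w / 2)"
  proof -
    have "1 * w \<le> E * w" using E w by (intro mult_right_mono) auto
    then show ?thesis by (simp add: algebra_simps)
  qed
  then show "1 / E \<le> (1 + w / 2) / (E + w / 2)"
    using E0 w by (simp add: divide_simps) (simp add: algebra_simps)
  have "(1 + w / 2) / (E + w / 2) = (w / v * (1 + w / 2)) / (w / v * (E + w / 2))"
    using v w by simp
  also have "\<dots> \<le> (w / v * (1 + w / 2)) / L"
    using mult_pos_pos[OF G0 L0] D0 up by (intro divide_left_mono) auto
  finally show "(1 + w / 2) / (E + w / 2) \<le> (w / v * (1 + w / 2)) / L" .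
  show "(w / v * (1 + w / 2)) / L \<le> 1" by (subst divide_le_eq_1_pos[OF L0]) (rule lo)
  have D1: "w / v * (1 + w / 2) \<le> w / v * (E + w / 2)"
    using v w E by (intro mult_left_mono) auto
  show "1 \<le> (w / v * (E + w / 2)) / L" by (subst le_divide_eq_1_pos[OF L0]) (rule up)
  have vw: "2 * v + v * w = v * (2 + w)" by (simp add: algebra_simps)
  have vw0: "2 * v + v * w > 0" using v w by (simp add: add_pos_pos)
  have key: "(w / v)\<^sup>2 * e2 / 2 \<le> L * (w * e2 / (2 * v + v * w))"
  proof -
    have "(w / v)\<^sup>2 * e2 / 2 = (w / v * (1 + w / 2)) * (w * e2 / (2 * v + v * w))"
    proof -
      have "(w / v * (1 + w / 2)) * (w * e2 / (v * (2 + w))) = (w * (2 + w) * (w * e2)) / ((2 * v) * (v * (2 + w)))"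
        by (simp add: field_simps)
      also have "\<dots> = (w * (w * e2)) / ((2 * v) * v)"
        using v w by (simp add: mult.assoc mult.left_commute[of "2 + w"])
      also have "\<dots> = (w / v)\<^sup>2 * e2 / 2" by (simp add: power2_eq_square field_simps)
      finally show ?thesis unfolding vw by simp
    qed
    also have "\<dots> \<le> L * (w * e2 / (2 * v + v * w))"
      using lo w e2 vw0 by (intro mult_right_mono) auto
    finally show ?thesis .
  qed
  have "w / v * (E + w / 2) \<le> L + L * (w * e2 / (2 * v + v * w))"
    using lo2 key by linarith
  also have "\<dots> = (1 + w * e2 / (2 * v + v * w)) * L" by (simp add: distrib_right)
  finally have "w / v * (E + w / 2) \<le> (1 + w * e2 / (2 * v + v * w)) * L" .
  then show "(w / v * (E + w / 2)) / L \<le> 1 + w * e2 / (2 * v + v * w)"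
    by (subst pos_divide_le_eq[OF L0])
  have "w * e2 / (2 * v + v * w) \<le> e2 / v"
  proof -
    have "w * e2 * v \<le> e2 * (2 * v + v * w)"
      using v w e2 by (simp add: algebra_simps)
    then show ?thesis using v vw0 by (simp add: divide_simps)
  qed
  then show "1 + w * e2 / (2 * v + v * w) \<le> 1 + e2 / v" by simp
qed



lemma alg1: "A * (1 - t * (Z - 1) + (t * (Z - 1))\<^sup>2 / 2) * P = A * ((1 + t) * P - t * (Z * P) + t\<^sup>2 / 2 * ((Z - 1)\<^sup>2 * P))"
  for A t Z P :: real
  by (simp add: power2_eq_square field_simps)

theorem proposition1:
  fixes M :: "'a measure" and N :: "'a \<Rightarrow> real"
    and T r \<nu> \<mu> \<eta> \<sigma> \<rho> s\<^sub>0 lam \<gamma> :: real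
  assumes "prob_space M" and "distributed M lborel N std_normal_density"
    and "T > 0" and "\<eta> > 0" and "\<sigma> > 0" and "-1 < \<rho>" and "\<rho> < 1"
    and "s\<^sub>0 > 0" and "lam > 0" and "\<gamma> > 0"
  shows
    "let \<theta> = lam * \<gamma> * (1 - \<rho>\<^sup>2);
         m = exp ((\<nu> - \<eta> * \<rho> * (\<mu> - r) / \<sigma> - \<eta>\<^sup>2 / 2) * T);
         w = lambertW (s\<^sub>0 * \<eta>\<^sup>2 * T * m * \<theta>);
         D = lam * exp (- r * T) / (\<theta> * \<eta>\<^sup>2 * T) * w * (1 + w / 2);
         G = lam * exp (- r * T) / \<theta> * (w / (\<eta>\<^sup>2 * T)) * (exp (\<eta>\<^sup>2 / 2 * T) + w / 2);
         p = - exp (- r * T) / (\<gamma> * (1 - \<rho>\<^sup>2)) *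
               ln (\<integral>\<omega>. exp (- \<theta> * s\<^sub>0 * m * exp (\<eta> * sqrt T * N \<omega>)) \<partial>M);
         e\<^sub>2 = exp (2 * \<eta>\<^sup>2 * T) - 2 * (1 + \<eta>\<^sup>2 * T) * exp (\<eta>\<^sup>2 * T / 2) + \<eta>\<^sup>2 * T + 1
     in exp (- (\<eta>\<^sup>2 * T / 2)) \<le> (1 + w / 2) / (exp (\<eta>\<^sup>2 * T / 2) + w / 2)
        \<and> (1 + w / 2) / (exp (\<eta>\<^sup>2 * T / 2) + w / 2) \<le> D / p
        \<and> D / p \<le> 1
        \<and> 1 \<le> G / p
        \<and> G / p \<le> 1 + w * e\<^sub>2 / (2 * \<eta>\<^sup>2 * T + \<eta>\<^sup>2 * T * w)
        \<and> 1 + w * e\<^sub>2 / (2 * \<eta>\<^sup>2 * T + \<eta>\<^sup>2 * T * w) \<le> 1 + e\<^sub>2 / (\<eta>\<^sup>2 * T)"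
proof -
  note distr = assms(2)
  define v where "v = \<eta>\<^sup>2 * T"
  define s where "s = \<eta> * sqrt T"
  have v0: "v > 0" using assms by (simp add: v_def)
  have s0: "s > 0" using assms by (simp add: s_def)
  have ss: "s\<^sup>2 = v" using assms by (simp add: s_def v_def power_mult_distrib)
  define \<theta> where "\<theta> = lam * \<gamma> * (1 - \<rho>\<^sup>2)"
  have r2: "1 - \<rho>\<^sup>2 > 0"
  proof -
    have "1 - \<rho>\<^sup>2 = (1 - \<rho>) * (1 + \<rho>)" by (simp add: power2_eq_square algebra_simps)
    also have "\<dots> > 0" using assms by (intro mult_pos_pos) auto
    finally show ?thesis .
  qed
  have th0: "\<theta> > 0" using assms r2 by (simp add: \<theta>_def)
  define m where "m = exp ((\<nu> - \<eta> * \<rho> * (\<mu> - r) / \<sigma> - \<eta>\<^sup>2 / 2) * T)"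
  have m0: "m > 0" by (simp add: m_def)
  define a where "a = \<theta> * s\<^sub>0 * m"
  have a0: "a > 0" using th0 m0 assms by (simp add: a_def)
  have arg: "s\<^sub>0 * \<eta>\<^sup>2 * T * m * \<theta> = a * v" by (simp add: a_def v_def ac_simps)
  define w where "w = lambertW (a * v)"
  have w0: "w > 0" and wew: "w * exp w = a * v"
    using lambertW_prop[of "a * v"] a0 v0 by (simp_all add: w_def)
  define t where "t = w / v"
  have t0: "t > 0" using w0 v0 by (simp add: t_def)
  have at: "a * exp (- w) = t"
  proof -
    have "a = w * exp w / v" using wew v0 by (simp add: field_simps)
    then show ?thesis by (simp add: t_def exp_minus field_simps)
  qed
  define E where "E = exp (v / 2)"
  have E1: "E \<ge> 1" using v0 by (simp add: E_def)
  define e2 where "e2 = exp (2 * v) - 2 * (1 + v) * exp (v / 2) + v + 1"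
  define Z where "Z = (\<lambda>y. exp (s * y) - s * y)"
  have Z1: "Z y \<ge> 1" for y unfolding Z_def using exp_ge_add_one_self[of "s * y"] by linarith
  have MZ: "has_bochner_integral lborel (\<lambda>x. Z x * std_normal_density x) E"
    using gauss_moments(1)[of s] by (simp add: Z_def E_def ss)
  have MZ2: "has_bochner_integral lborel (\<lambda>x. (Z x - 1)\<^sup>2 * std_normal_density x) e2"
    using gauss_moments(2)[of s] by (simp add: Z_def e2_def ss)
  have H0: "has_bochner_integral lborel (\<lambda>x. std_normal_density x) 1"
    by (simp add: has_bochner_integral_iff)
  have e2pos: "e2 \<ge> 0"
  proof -
    have "0 \<le> (\<integral>x. (Z x - 1)\<^sup>2 * std_normal_density x \<partial>lborel)" by (intro integral_nonneg_AE AE_I2) simp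
    moreover have "(\<integral>x. (Z x - 1)\<^sup>2 * std_normal_density x \<partial>lborel) = e2"
      by (rule has_bochner_integral_integral_eq[OF MZ2])
    ultimately show ?thesis by linarith
  qed
  define I where "I = (\<integral>y. exp (- t * Z y) * std_normal_density y \<partial>lborel)"
  have Zmeas[measurable]: "Z \<in> borel_measurable borel" unfolding Z_def by measurable
  have intI: "integrable lborel (\<lambda>y. exp (- t * Z y) * std_normal_density y)"
  proof (rule Bochner_Integration.integrable_bound[OF integrable.intros[OF H0]])
    show "(\<lambda>y. exp (- t * Z y) * std_normal_density y) \<in> borel_measurable lborel" by measurable
    have "exp (- t * Z y) \<le> 1" for y using t0 Z1[of y] by (simp add: mult_nonneg_nonneg)
    then show "AE y in lborel. norm (exp (- t * Z y) * std_normal_density y) \<le> norm (std_normal_density y)"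
      by (intro AE_I2) (simp add: mult_left_le_one_le)
  qed

  define J where "J = (\<integral>\<omega>. exp (- \<theta> * s\<^sub>0 * m * exp (\<eta> * sqrt T * N \<omega>)) \<partial>M)"
  have JI: "J = exp (- (w\<^sup>2 / v) / 2) * I"
  proof -
    have "J = (\<integral>x. std_normal_density x * exp (- \<theta> * s\<^sub>0 * m * exp (\<eta> * sqrt T * x)) \<partial>lborel)"
      unfolding J_def by (rule distributed_integral[OF distr, symmetric]) auto
    also have "\<dots> = (\<integral>x. exp (- a * exp (s * x)) * std_normal_density x \<partial>lborel)"
      by (rule Bochner_Integration.integral_cong) (simp_all add: a_def s_def mult_ac)
    also have "\<dots> = exp (- (- w / s)\<^sup>2 / 2) *
        (\<integral>x. exp (- a * exp (s * (x + - w / s))) * exp (- (- w / s) * x) * std_normal_density x \<partial>lborel)"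
      by (rule shift_integral)
    also have "\<dots> = exp (- (w\<^sup>2 / v) / 2) * I"
    proof -
      have c2: "(- w / s)\<^sup>2 = w\<^sup>2 / v" using ss by (simp add: power_divide)
      have pw: "exp (- a * exp (s * (x + - w / s))) * exp (- (- w / s) * x) = exp (- t * Z x)" for x
      proof -
        have h1: "s * (x + - w / s) = s * x + - w" using s0 by (simp add: field_simps)
        have h2: "- a * exp (s * x + - w) = - t * exp (s * x)"
          unfolding exp_add using at by (simp add: mult_ac)
        have h3: "- (- w / s) * x = t * (s * x)"
          using s0 v0 ss by (simp add: t_def power2_eq_square field_simps)
        show ?thesis unfolding h1 h2 h3 mult_exp_exp Z_def by (simp add: algebra_simps)
      qed
      show ?thesis unfolding c2 pw I_def ..
    qed
    finally show ?thesis .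
  qed
  have B1: "I \<le> exp (- t)"
  proof -
    have "I \<le> (\<integral>y. exp (- t) * std_normal_density y \<partial>lborel)"
      unfolding I_def
    proof (rule integral_mono[OF intI])
      show "integrable lborel (\<lambda>y. exp (- t) * std_normal_density y)" by simp
      fix y
      have "t * 1 \<le> t * Z y" using t0 Z1[of y] by (intro mult_left_mono) auto
      then have "exp (- t * Z y) \<le> exp (- t)" by simp
      then show "exp (- t * Z y) * std_normal_density y \<le> exp (- t) * std_normal_density y"
        by (intro mult_right_mono) auto
    qed
    then show ?thesis by simp
  qed
  have B2: "exp (- t * E) \<le> I"
  proof -
    have hb: "has_bochner_integral lborel
        (\<lambda>y. (exp (- t * E) * (1 + t * E)) * std_normal_density y - (exp (- t * E) * t) * (Z y * std_normal_density y))
        ((exp (- t * E) * (1 + t * E)) * 1 - (exp (- t * E) * t) * E)"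
      by (intro has_bochner_integral_diff has_bochner_integral_mult_right H0 MZ)
    have "(exp (- t * E) * (1 + t * E)) * 1 - (exp (- t * E) * t) * E
        = (\<integral>y. (exp (- t * E) * (1 + t * E)) * std_normal_density y - (exp (- t * E) * t) * (Z y * std_normal_density y) \<partial>lborel)"
      using hb by (simp add: has_bochner_integral_iff)
    also have "\<dots> \<le> I"
      unfolding I_def
    proof (rule integral_mono[OF _ intI])
      show "integrable lborel (\<lambda>y. (exp (- t * E) * (1 + t * E)) * std_normal_density y - (exp (- t * E) * t) * (Z y * std_normal_density y))"
        using hb by (simp add: has_bochner_integral_iff)
      fix y
      have "exp (- t * E) * (1 + (t * E - t * Z y)) \<le> exp (- t * E) * exp (t * E - t * Z y)"
        by (intro mult_left_mono) auto
      also have "\<dots> = exp (- t * Z y)" unfolding mult_exp_exp by simp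
      finally have "exp (- t * E) * (1 + (t * E - t * Z y)) * std_normal_density y \<le> exp (- t * Z y) * std_normal_density y"
        by (intro mult_right_mono) auto
      then show "(exp (- t * E) * (1 + t * E)) * std_normal_density y - (exp (- t * E) * t) * (Z y * std_normal_density y)
          \<le> exp (- t * Z y) * std_normal_density y"
        by (simp add: algebra_simps)
    qed
    finally show ?thesis by (simp add: algebra_simps)
  qed
  have B3: "I \<le> exp (- t) * (1 + (- t * (E - 1) + t\<^sup>2 * e2 / 2))"
  proof -
    have hb: "has_bochner_integral lborel
        (\<lambda>y. exp (- t) * ((1 + t) * std_normal_density y - t * (Z y * std_normal_density y)
              + t\<^sup>2 / 2 * ((Z y - 1)\<^sup>2 * std_normal_density y)))
        (exp (- t) * ((1 + t) * 1 - t * E + t\<^sup>2 / 2 * e2))"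
      by (intro has_bochner_integral_diff has_bochner_integral_add has_bochner_integral_mult_right H0 MZ MZ2)
    have "I \<le> (\<integral>y. exp (- t) * ((1 + t) * std_normal_density y - t * (Z y * std_normal_density y)
              + t\<^sup>2 / 2 * ((Z y - 1)\<^sup>2 * std_normal_density y)) \<partial>lborel)"
      unfolding I_def
    proof (rule integral_mono[OF intI])
      show "integrable lborel (\<lambda>y. exp (- t) * ((1 + t) * std_normal_density y - t * (Z y * std_normal_density y)
              + t\<^sup>2 / 2 * ((Z y - 1)\<^sup>2 * std_normal_density y)))"
        using hb by (simp add: has_bochner_integral_iff)
      fix y
      have u0: "0 \<le> t * (Z y - 1)" using t0 Z1[of y] by simp
      have "exp (- t * Z y) = exp (- t) * exp (- (t * (Z y - 1)))"
        unfolding mult_exp_exp by (simp add: algebra_simps)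
      also have "\<dots> \<le> exp (- t) * (1 - t * (Z y - 1) + (t * (Z y - 1))\<^sup>2 / 2)"
        using exp_neg_quad[OF u0] by (intro mult_left_mono) auto
      finally have "exp (- t * Z y) * std_normal_density y \<le> exp (- t) * (1 - t * (Z y - 1) + (t * (Z y - 1))\<^sup>2 / 2) * std_normal_density y"
        by (intro mult_right_mono) auto
      also have "exp (- t) * (1 - t * (Z y - 1) + (t * (Z y - 1))\<^sup>2 / 2) * std_normal_density y
          = exp (- t) * ((1 + t) * std_normal_density y - t * (Z y * std_normal_density y)
              + t\<^sup>2 / 2 * ((Z y - 1)\<^sup>2 * std_normal_density y))"
        by (rule alg1)
      finally show "exp (- t * Z y) * std_normal_density y \<le> exp (- t) * ((1 + t) * std_normal_density y - t * (Z y * std_normal_density y)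
              + t\<^sup>2 / 2 * ((Z y - 1)\<^sup>2 * std_normal_density y))" .
    qed
    also have "\<dots> = exp (- t) * ((1 + t) * 1 - t * E + t\<^sup>2 / 2 * e2)"
      using hb by (simp add: has_bochner_integral_iff)
    finally show ?thesis by (simp add: algebra_simps)
  qed
  have I0: "I > 0" using B2 by (meson exp_gt_zero less_le_trans)
  have lnI1: "ln I \<le> - t"
  proof -
    have "ln I \<le> ln (exp (- t))" using B1 I0 by (subst ln_le_cancel_iff) auto
    then show ?thesis by simp
  qed
  have lnI2: "- t * E \<le> ln I" using B2 I0 by (simp add: ln_ge_iff)
  have lnI3: "ln I \<le> - t * E + t\<^sup>2 * e2 / 2"
  proof -
    have "I \<le> exp (- t) * exp (- t * (E - 1) + t\<^sup>2 * e2 / 2)"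
      using B3 exp_ge_add_one_self[of "- t * (E - 1) + t\<^sup>2 * e2 / 2"]
      by (meson exp_gt_zero less_imp_le mult_left_mono order_trans)
    also have "\<dots> = exp (- t * E + t\<^sup>2 * e2 / 2)" unfolding mult_exp_exp by (simp add: algebra_simps)
    finally have "ln I \<le> ln (exp (- t * E + t\<^sup>2 * e2 / 2))" using I0 by (subst ln_le_cancel_iff) auto
    then show ?thesis by simp
  qed
  define L where "L = - ln J"
  have LI: "L = (w\<^sup>2 / v) / 2 - ln I"
    unfolding L_def JI using I0 by (simp add: ln_mult)
  have wv: "w / v * (1 + w / 2) = t + (w\<^sup>2 / v) / 2" "w / v * (E + w / 2) = t * E + (w\<^sup>2 / v) / 2"
    using v0 by (simp_all add: t_def power2_eq_square field_simps)
  have lo: "w / v * (1 + w / 2) \<le> L" unfolding wv LI using lnI1 by linarith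
  have up: "L \<le> w / v * (E + w / 2)" unfolding wv LI using lnI2 by linarith
  have lo2: "w / v * (E + w / 2) - (w / v)\<^sup>2 * e2 / 2 \<le> L"
  proof -
    have tt: "(w / v)\<^sup>2 = t\<^sup>2" by (simp add: t_def)
    show ?thesis unfolding tt wv LI using lnI3 by linarith
  qed
  note F = final_ineq[OF v0 w0 E1 e2pos lo up lo2]
  define K where "K = exp (- r * T) / (\<gamma> * (1 - \<rho>\<^sup>2))"
  have K0: "K > 0" using assms r2 by (simp add: K_def)
  have nz: "lam \<noteq> 0" "\<gamma> \<noteq> 0" "1 - \<rho>\<^sup>2 \<noteq> 0" "\<eta> \<noteq> 0" "T \<noteq> 0"
    using assms r2 by auto
  have Dq: "lam * exp (- r * T) / (\<theta> * \<eta>\<^sup>2 * T) * w * (1 + w / 2) = K * (w / v * (1 + w / 2))"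
    using nz by (simp add: K_def \<theta>_def v_def field_simps)
  have Gq: "lam * exp (- r * T) / \<theta> * (w / (\<eta>\<^sup>2 * T)) * (exp (\<eta>\<^sup>2 / 2 * T) + w / 2) = K * (w / v * (E + w / 2))"
  proof -
    have "exp (\<eta>\<^sup>2 / 2 * T) = E" by (simp add: E_def v_def)
    then show ?thesis using nz by (simp add: K_def \<theta>_def v_def field_simps)
  qed
  have pq: "- exp (- r * T) / (\<gamma> * (1 - \<rho>\<^sup>2)) * ln J = K * L" by (simp add: K_def L_def)
  have e2q: "exp (2 * \<eta>\<^sup>2 * T) - 2 * (1 + \<eta>\<^sup>2 * T) * exp (\<eta>\<^sup>2 * T / 2) + \<eta>\<^sup>2 * T + 1 = e2"
    by (simp add: e2_def v_def mult.assoc)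
  have dq: "2 * \<eta>\<^sup>2 * T + \<eta>\<^sup>2 * T * w = 2 * v + v * w" by (simp add: v_def mult.assoc)
  have ex: "exp (- (\<eta>\<^sup>2 * T / 2)) = 1 / E" by (simp add: E_def v_def exp_minus inverse_eq_divide)
  have vq: "\<eta>\<^sup>2 * T = v" by (simp add: v_def)
  have c1: "K * (w / v * (1 + w / 2)) / (K * L) = (w / v * (1 + w / 2)) / L" using K0 by simp
  have c2: "K * (w / v * (E + w / 2)) / (K * L) = (w / v * (E + w / 2)) / L" using K0 by simp
  show ?thesis
    apply (unfold Let_def)
    apply (unfold \<theta>_def[symmetric] m_def[symmetric])
    apply (unfold arg)
    apply (unfold w_def[symmetric])
    apply (unfold J_def[symmetric])
    apply (unfold Dq Gq pq e2q dq ex)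
    apply (unfold vq)
    apply (unfold E_def[symmetric])
    apply (unfold c1 c2)
    apply (intro conjI F)
    done
qed
end
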